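(* Let $J\subseteq S$. If $\Pi_\downarrow^J(u)=\Pi_\downarrow^J(v)$ for some $u,v\in\mathfrak{S}_n^J$, then $\Pi_\uparrow^J(u)=\Pi_\uparrow^J(v)$.
   Context: $\mathfrak{S}_n$ is the symmetric group on $[n]$, $s_i=(i,i+1)$, $S=\{s_1,\dots,s_{n-1}\}$, one-line notation $w=w_1\cdots w_n$, $\mathrm{inv}(w)=\{(i,j):i<j,\ w_i>w_j\}$, weak order $u\le_S v\iff\mathrm{inv}(u)\subseteq\mathrm{inv}(v)$. For $J\subseteq S$, $\mathfrak{S}_n^J$ is the set of $w$ with $w_i<w_{i+1}$ whenever $s_i\in J$. Writing $J=S\setminus\{s_{j_1},\dots,s_{j_r}\}$ with $j_1<\dots<j_r$, the $J$-regions are $\{1,\dots,j_1\},\{j_1+1,\dots,j_2\},\dots,\{j_r+1,\dots,n\}$. $w\in\mathfrak{S}_n^J$ is $(J,231)$-avoiding if there are no indices $i<j<k$ in pairwise different $J$-regions with $w_k<w_i<w_j$ and $w_i=w_k+1$, and $(J,132)$-avoiding if there are no indices $i<j<k$ in pairwise different $J$-regions with $w_i<w_k<w_j$ and $w_k=w_i+1$. For $w\in\mathfrak{S}_n^J$, $\Pi_\downarrow^J(w)$ is the unique greatest $(J,231)$-avoiding element of $\mathfrak{S}_n^J$ that is $\le_S w$, and $\Pi_\uparrow^J(w)$ is the unique least $(J,132)$-avoiding element of $\mathfrak{S}_n^J$ that is $\ge_S w$ (both exist). *)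

theory Defs
  imports "HOL-Combinatorics.Permutations"
begin

(* Permutations of [n] = {1..n} as functions w :: nat => nat with w permutes {1..n};
   w i is the i-th entry of the one-line notation.
   A subset J of S = {s_1,...,s_{n-1}} is represented by the set of indices
   {i. s_i \<in> J}, a subset of {1..<n}. *)

definition inv_set :: "nat \<Rightarrow> (nat \<Rightarrow> nat) \<Rightarrow> (nat \<times> nat) set" where
  "inv_set n w = {(i, j). 1 \<le> i \<and> i < j \<and> j \<le> n \<and> w i > w j}"

definition weak_le :: "nat \<Rightarrow> (nat \<Rightarrow> nat) \<Rightarrow> (nat \<Rightarrow> nat) \<Rightarrow> bool" where
  "weak_le n u v \<longleftrightarrow> inv_set n u \<subseteq> inv_set n v"

definition parabolic :: "nat \<Rightarrow> nat set \<Rightarrow> (nat \<Rightarrow> nat) set" where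
  "parabolic n J = {w. w permutes {1..n} \<and> (\<forall>i\<in>J. w i < w (i + 1))}"

(* for i \<le> k: positions i and k lie in the same J-region iff no s_m with i \<le> m < k is missing from J *)
definition same_region :: "nat set \<Rightarrow> nat \<Rightarrow> nat \<Rightarrow> bool" where
  "same_region J i k \<longleftrightarrow> (\<forall>m. i \<le> m \<and> m < k \<longrightarrow> m \<in> J)"

definition avoids231 :: "nat \<Rightarrow> nat set \<Rightarrow> (nat \<Rightarrow> nat) \<Rightarrow> bool" where
  "avoids231 n J w \<longleftrightarrow> \<not> (\<exists>i j k. 1 \<le> i \<and> i < j \<and> j < k \<and> k \<le> n \<and>
      \<not> same_region J i j \<and> \<not> same_region J j k \<and> \<not> same_region J i k \<and>
      w k < w i \<and> w i < w j \<and> w i = w k + 1)"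

definition avoids132 :: "nat \<Rightarrow> nat set \<Rightarrow> (nat \<Rightarrow> nat) \<Rightarrow> bool" where
  "avoids132 n J w \<longleftrightarrow> \<not> (\<exists>i j k. 1 \<le> i \<and> i < j \<and> j < k \<and> k \<le> n \<and>
      \<not> same_region J i j \<and> \<not> same_region J j k \<and> \<not> same_region J i k \<and>
      w i < w k \<and> w k < w j \<and> w k = w i + 1)"

definition Pi_down :: "nat \<Rightarrow> nat set \<Rightarrow> (nat \<Rightarrow> nat) \<Rightarrow> (nat \<Rightarrow> nat)" where
  "Pi_down n J w = (THE x. x \<in> parabolic n J \<and> avoids231 n J x \<and> weak_le n x w \<and>
      (\<forall>y. y \<in> parabolic n J \<and> avoids231 n J y \<and> weak_le n y w \<longrightarrow> weak_le n y x))"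

definition Pi_up :: "nat \<Rightarrow> nat set \<Rightarrow> (nat \<Rightarrow> nat) \<Rightarrow> (nat \<Rightarrow> nat)" where
  "Pi_up n J w = (THE x. x \<in> parabolic n J \<and> avoids132 n J x \<and> weak_le n w x \<and>
      (\<forall>y. y \<in> parabolic n J \<and> avoids132 n J y \<and> weak_le n w y \<longrightarrow> weak_le n x y))"

end

theory Submission
  imports Defs
begin

lemma perm_in: "w permutes {1..n} \<Longrightarrow> p \<in> {1..n} \<Longrightarrow> w p \<in> {1..n}"
  using permutes_in_image[of w "{1..n}" p] by blast

lemma perm_inj: "w permutes {1..n} \<Longrightarrow> w p = w q \<Longrightarrow> p = q"
  using permutes_inj[of w] by (auto simp: inj_def)

lemma perm_surj: "w permutes {1..n} \<Longrightarrow> v \<in> {1..n} \<Longrightarrow> \<exists>p\<in>{1..n}. w p = v"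
  using permutes_image[of w "{1..n}"] by (metis imageE)

lemma sr_mono: "\<not> same_region J a b \<Longrightarrow> a' \<le> a \<Longrightarrow> b \<le> b' \<Longrightarrow> \<not> same_region J a' b'"
  unfolding same_region_def by (meson le_trans less_le_trans)

lemma G231:
  assumes x: "x permutes {1..n}" and "1 \<le> i" "i < j" "j < k" "k \<le> n"
    and s1: "\<not> same_region J i j" and s2: "\<not> same_region J j k" and s3: "\<not> same_region J i k"
    and "x k < x i" "x i < x j"
    and H: "\<forall>p. 1 \<le> p \<and> p \<le> n \<and> x k < x p \<and> x p < x i \<longrightarrow> p < i \<or> k < p"
  shows "\<not> avoids231 n J x"
proof -
  define S where "S = {v. x k \<le> v \<and> v \<le> x i \<and> (\<exists>p. k \<le> p \<and> p \<le> n \<and> x p = v)}"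
  have fin: "finite S" unfolding S_def by (rule finite_subset[of _ "{..x i}"]) auto
  have "x k \<in> S" unfolding S_def using assms by auto
  define v where "v = Max S"
  have vS: "v \<in> S" using fin \<open>x k \<in> S\<close> v_def by (metis Max_in empty_iff)
  have vmax: "\<And>u. u \<in> S \<Longrightarrow> u \<le> v" using fin v_def by simp
  obtain p where p: "k \<le> p" "p \<le> n" "x p = v" "x k \<le> v" "v \<le> x i"
    using vS unfolding S_def by auto
  have "v \<noteq> x i"
  proof
    assume "v = x i"
    then have "p = i" using perm_inj[OF x] p by metis
    then show False using p assms by simp
  qed
  then have v1: "v + 1 \<le> x i" using p by simp
  have "x i \<in> {1..n}" using perm_in[OF x] assms by simp
  then have "v + 1 \<in> {1..n}" using v1 by simp
  then obtain q where q: "q \<in> {1..n}" "x q = v + 1" using perm_surj[OF x] by blast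
  have nk: "\<not> k \<le> q"
  proof
    assume "k \<le> q"
    then have "v + 1 \<in> S" unfolding S_def using q p v1 by auto
    then show False using vmax by fastforce
  qed
  have qi: "q \<le> i"
  proof (cases "v + 1 = x i")
    case True then have "q = i" using perm_inj[OF x, of q i] q by simp
    then show ?thesis by simp
  next
    case False
    then have "x k < x q" "x q < x i" using q p v1 by auto
    then show ?thesis using H[rule_format, of q] q nk by auto
  qed
  show ?thesis unfolding avoids231_def
    apply (rule notI, erule notE)
    apply (rule exI[of _ q], rule exI[of _ j], rule exI[of _ p])
    using q p qi nk assms sr_mono[OF s1, of q j] sr_mono[OF s2, of j p] sr_mono[OF s3, of q p] v1
    by auto
qed

lemma G132:
  assumes x: "x permutes {1..n}" and "1 \<le> i" "i < j" "j < k" "k \<le> n"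
    and s1: "\<not> same_region J i j" and s2: "\<not> same_region J j k" and s3: "\<not> same_region J i k"
    and "x i < x k" "x k < x j"
    and H: "\<forall>p. 1 \<le> p \<and> p \<le> n \<and> x i < x p \<and> x p < x k \<longrightarrow> p < i \<or> k < p"
  shows "\<not> avoids132 n J x"
proof -
  define S where "S = {v. x i \<le> v \<and> v \<le> x k \<and> (\<exists>p. 1 \<le> p \<and> p \<le> i \<and> x p = v)}"
  have fin: "finite S" unfolding S_def by (rule finite_subset[of _ "{..x k}"]) auto
  have "x i \<in> S" unfolding S_def using assms by auto
  define v where "v = Max S"
  have vS: "v \<in> S" using fin \<open>x i \<in> S\<close> v_def by (metis Max_in empty_iff)
  have vmax: "\<And>u. u \<in> S \<Longrightarrow> u \<le> v" using fin v_def by simp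
  obtain p where p: "1 \<le> p" "p \<le> i" "x p = v" "x i \<le> v" "v \<le> x k"
    using vS unfolding S_def by auto
  have "v \<noteq> x k"
  proof
    assume "v = x k"
    then have "p = k" using perm_inj[OF x] p by metis
    then show False using p assms by simp
  qed
  then have v1: "v + 1 \<le> x k" using p by simp
  have "x k \<in> {1..n}" using perm_in[OF x] assms by simp
  then have "v + 1 \<in> {1..n}" using v1 by simp
  then obtain q where q: "q \<in> {1..n}" "x q = v + 1" using perm_surj[OF x] by blast
  have nk: "\<not> q \<le> i"
  proof
    assume "q \<le> i"
    then have "v + 1 \<in> S" unfolding S_def using q p v1 by auto
    then show False using vmax by fastforce
  qed
  have qi: "k \<le> q"
  proof (cases "v + 1 = x k")
    case True then have "q = k" using perm_inj[OF x, of q k] q by simp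
    then show ?thesis by simp
  next
    case False
    then have "x i < x q" "x q < x k" using q p v1 by auto
    then show ?thesis using H[rule_format, of q] q nk by auto
  qed
  show ?thesis unfolding avoids132_def
    apply (rule notI, erule notE)
    apply (rule exI[of _ p], rule exI[of _ j], rule exI[of _ q])
    using q p qi nk assms sr_mono[OF s1, of p j] sr_mono[OF s2, of j q] sr_mono[OF s3, of p q] v1
    by auto
qed


lemma A231:
  assumes w: "w permutes {1..n}" and y: "y permutes {1..n}"
    and sub: "inv_set n y \<subseteq> inv_set n w"
    and "1 \<le> i" "i < j" "j < k" "k \<le> n"
    and s1: "\<not> same_region J i j" and s2: "\<not> same_region J j k" and s3: "\<not> same_region J i k"
    and "w k < w i" "w i < w j" "w i = w k + 1" and av: "avoids231 n J y"
  shows "y i < y k"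
proof (rule ccontr)
  assume "\<not> y i < y k"
  moreover have "y i \<noteq> y k" using perm_inj[OF y, of i k] assms by auto
  ultimately have yki: "y k < y i" by simp
  have yij: "y i < y j"
  proof (rule ccontr)
    assume "\<not> y i < y j"
    moreover have "y i \<noteq> y j" using perm_inj[OF y, of i j] assms by auto
    ultimately have "(i, j) \<in> inv_set n y" unfolding inv_set_def using assms by auto
    then have "(i, j) \<in> inv_set n w" using sub by auto
    then show False unfolding inv_set_def using assms by auto
  qed
  have H: "\<forall>p. 1 \<le> p \<and> p \<le> n \<and> y k < y p \<and> y p < y i \<longrightarrow> p < i \<or> k < p"
  proof (intro allI impI)
    fix p assume p: "1 \<le> p \<and> p \<le> n \<and> y k < y p \<and> y p < y i"
    show "p < i \<or> k < p"
    proof (rule ccontr)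
      assume "\<not> (p < i \<or> k < p)"
      moreover have "p \<noteq> i" "p \<noteq> k" using p by auto
      ultimately have ip: "i < p" "p < k" by auto
      have "(i, p) \<in> inv_set n y" "(p, k) \<in> inv_set n y"
        unfolding inv_set_def using p ip assms by auto
      then have "(i, p) \<in> inv_set n w" "(p, k) \<in> inv_set n w" using sub by auto
      then show False unfolding inv_set_def using assms by auto
    qed
  qed
  show False using G231[OF y assms(4-10) yki yij H] av by simp
qed

lemma B132:
  assumes w: "w permutes {1..n}" and z: "z permutes {1..n}"
    and sub: "inv_set n w \<subseteq> inv_set n z"
    and "1 \<le> i" "i < j" "j < k" "k \<le> n"
    and s1: "\<not> same_region J i j" and s2: "\<not> same_region J j k" and s3: "\<not> same_region J i k"
    and "w i < w k" "w k < w j" "w k = w i + 1" and av: "avoids132 n J z"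
  shows "z k < z i"
proof (rule ccontr)
  assume "\<not> z k < z i"
  moreover have "z i \<noteq> z k" using perm_inj[OF z, of i k] assms by auto
  ultimately have zik: "z i < z k" by simp
  have "(j, k) \<in> inv_set n w" unfolding inv_set_def using assms by auto
  then have "(j, k) \<in> inv_set n z" using sub by auto
  then have zkj: "z k < z j" unfolding inv_set_def by auto
  have H: "\<forall>p. 1 \<le> p \<and> p \<le> n \<and> z i < z p \<and> z p < z k \<longrightarrow> p < i \<or> k < p"
  proof (intro allI impI)
    fix p assume p: "1 \<le> p \<and> p \<le> n \<and> z i < z p \<and> z p < z k"
    show "p < i \<or> k < p"
    proof (rule ccontr)
      assume "\<not> (p < i \<or> k < p)"
      moreover have "p \<noteq> i" "p \<noteq> k" using p by auto
      ultimately have ip: "i < p" "p < k" by auto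
      have "w p \<noteq> w i" "w p \<noteq> w k" using perm_inj[OF w, of p i] perm_inj[OF w, of p k] ip by auto
      show False
      proof (cases "w p < w i")
        case True
        then have "(i, p) \<in> inv_set n w" unfolding inv_set_def using p ip assms by auto
        then have "(i, p) \<in> inv_set n z" using sub by auto
        then show False unfolding inv_set_def using p by auto
      next
        case False
        then have "w p > w k" using \<open>w p \<noteq> w i\<close> \<open>w p \<noteq> w k\<close> assms by auto
        then have "(p, k) \<in> inv_set n w" unfolding inv_set_def using p ip assms by auto
        then have "(p, k) \<in> inv_set n z" using sub by auto
        then show False unfolding inv_set_def using p by auto
      qed
    qed
  qed
  show False using G132[OF z assms(4-10) zik zkj H] av by simp
qed

lemma inv_set_fin: "finite (inv_set n w)"
  by (rule finite_subset[of _ "{1..n} \<times> {1..n}"]) (auto simp: inv_set_def)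

lemma swap_perm:
  fixes u :: "nat \<Rightarrow> nat"
  assumes u: "u permutes {1..n}" and "1 \<le> i" "i < k" "k \<le> n"
  shows "u \<circ> Transposition.transpose i k permutes {1..n}"
proof -
  have "i \<in> {1..n}" "k \<in> {1..n}" using assms by auto
  then have "Transposition.transpose i k permutes {1..n}" by (rule permutes_swap_id)
  then show ?thesis by (rule permutes_compose[OF _ u])
qed

lemma swap_inv:
  assumes u: "u permutes {1..n}" and "1 \<le> i" "i < k" "k \<le> n" and adj: "u k = u i + 1"
  shows "inv_set n (u \<circ> Transposition.transpose i k) = insert (i, k) (inv_set n u)"
    and "(i, k) \<notin> inv_set n u"
proof -
  have ne: "\<And>r. r \<noteq> i \<Longrightarrow> r \<noteq> k \<Longrightarrow> u r \<noteq> u i \<and> u r \<noteq> u k"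
    using perm_inj[OF u] by metis
  show "inv_set n (u \<circ> Transposition.transpose i k) = insert (i, k) (inv_set n u)"
  proof (rule set_eqI)
    fix x :: "nat \<times> nat"
    obtain p q where x: "x = (p, q)" by (cases x)
    show "x \<in> inv_set n (u \<circ> Transposition.transpose i k) \<longleftrightarrow> x \<in> insert (i, k) (inv_set n u)"
      unfolding x inv_set_def using assms ne[of p] ne[of q]
      by (auto simp: transpose_def split: if_splits)
  qed
  show "(i, k) \<notin> inv_set n u" unfolding inv_set_def using adj by auto
qed

lemma swap_par:
  assumes J: "J \<subseteq> {1..<n}" and u: "u \<in> parabolic n J" and "1 \<le> i" "i < k" "k \<le> n"
    and sr: "\<not> same_region J i k" and adj: "u k = u i + 1 \<or> u i = u k + 1"
  shows "u \<circ> Transposition.transpose i k \<in> parabolic n J"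
proof -
  have up: "u permutes {1..n}" using u by (simp add: parabolic_def)
  have ne: "\<And>r. r \<noteq> i \<Longrightarrow> r \<noteq> k \<Longrightarrow> u r \<noteq> u i \<and> u r \<noteq> u k"
    using perm_inj[OF up] by metis
  have nJ: "\<not> (i \<in> J \<and> k = i + 1)"
  proof
    assume a: "i \<in> J \<and> k = i + 1"
    have "same_region J i k" unfolding same_region_def
    proof (intro allI impI)
      fix m assume "i \<le> m \<and> m < k" then have "m = i" using a by simp
      then show "m \<in> J" using a by simp
    qed
    then show False using sr by simp
  qed
  have "\<forall>t\<in>J. (u \<circ> Transposition.transpose i k) t < (u \<circ> Transposition.transpose i k) (t + 1)"
  proof
    fix t assume t: "t \<in> J"
    have lt: "u t < u (t + 1)" using u t by (simp add: parabolic_def)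
    show "(u \<circ> Transposition.transpose i k) t < (u \<circ> Transposition.transpose i k) (t + 1)"
      using lt adj nJ t ne[of t] ne[of "t+1"] assms(4)
      by (auto simp: transpose_def split: if_splits)
  qed
  then show ?thesis using swap_perm[OF up assms(3-5)] by (simp add: parabolic_def)
qed

lemma perm_card:
  assumes w: "w permutes {1..n}" and p: "p \<in> {1..n}"
  shows "card {q\<in>{1..n}. w q \<le> w p} = w p"
proof -
  have wp: "w p \<in> {1..n}" using perm_in[OF w p] .
  have "w ` {q\<in>{1..n}. w q \<le> w p} = {1..w p}"
  proof
    show "w ` {q \<in> {1..n}. w q \<le> w p} \<subseteq> {1..w p}" using perm_in[OF w] by force
    show "{1..w p} \<subseteq> w ` {q \<in> {1..n}. w q \<le> w p}"
    proof
      fix v assume v: "v \<in> {1..w p}"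
      then have "v \<in> {1..n}" using wp by auto
      then obtain q where "q \<in> {1..n}" "w q = v" using perm_surj[OF w] by blast
      then show "v \<in> w ` {q \<in> {1..n}. w q \<le> w p}" using v by auto
    qed
  qed
  moreover have "inj_on w {q\<in>{1..n}. w q \<le> w p}"
    using permutes_inj[OF w] by (auto simp: inj_on_def inj_def)
  ultimately show ?thesis using card_image by fastforce
qed

lemma inv_eq:
  assumes u: "u permutes {1..n}" and v: "v permutes {1..n}" and eq: "inv_set n u = inv_set n v"
  shows "u = v"
proof
  fix p
  show "u p = v p"
  proof (cases "p \<in> {1..n}")
    case False
    then show ?thesis using permutes_not_in[OF u] permutes_not_in[OF v] by simp
  next
    case True
    have "{q\<in>{1..n}. u q \<le> u p} = {q\<in>{1..n}. v q \<le> v p}"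
    proof (rule Collect_cong)
      fix q
      show "(q \<in> {1..n} \<and> u q \<le> u p) = (q \<in> {1..n} \<and> v q \<le> v p)"
      proof (cases "q \<in> {1..n}")
        case q: True
        consider "q < p" | "q = p" | "p < q" by linarith
        then show ?thesis
        proof cases
          case 1
          have "(q, p) \<in> inv_set n u \<longleftrightarrow> (q, p) \<in> inv_set n v" using eq by simp
          then show ?thesis unfolding inv_set_def using 1 q True by auto
        next
          case 2 then show ?thesis by simp
        next
          case 3
          have "(p, q) \<in> inv_set n u \<longleftrightarrow> (p, q) \<in> inv_set n v" using eq by simp
          moreover have "u q \<noteq> u p" "v q \<noteq> v p" using perm_inj[OF u, of q p] perm_inj[OF v, of q p] 3 by auto
          ultimately show ?thesis unfolding inv_set_def using 3 q True by auto
        qed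
      qed auto
    qed
    then show ?thesis using perm_card[OF u True] perm_card[OF v True] by simp
  qed
qed

definition isDown where
  "isDown n J w x \<longleftrightarrow> x \<in> parabolic n J \<and> avoids231 n J x \<and> weak_le n x w \<and>
      (\<forall>y. y \<in> parabolic n J \<and> avoids231 n J y \<and> weak_le n y w \<longrightarrow> weak_le n y x)"

definition isUp where
  "isUp n J w x \<longleftrightarrow> x \<in> parabolic n J \<and> avoids132 n J x \<and> weak_le n w x \<and>
      (\<forall>y. y \<in> parabolic n J \<and> avoids132 n J y \<and> weak_le n w y \<longrightarrow> weak_le n x y)"

lemma stepUp:
  assumes J: "J \<subseteq> {1..<n}" and u: "u \<in> parabolic n J"
    and "1 \<le> i" "i < j" "j < k" "k \<le> n"
    and s1: "\<not> same_region J i j" and s2: "\<not> same_region J j k" and s3: "\<not> same_region J i k"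
    and "u i < u k" "u k < u j" "u k = u i + 1"
  shows "isUp n J u z \<longleftrightarrow> isUp n J (u \<circ> Transposition.transpose i k) z"
proof -
  have up: "u permutes {1..n}" using u by (simp add: parabolic_def)
  have ik: "i < k" using assms by simp
  have inv: "inv_set n (u \<circ> Transposition.transpose i k) = insert (i, k) (inv_set n u)"
    using swap_inv(1)[OF up assms(3) ik assms(6) assms(12)] .
  have key: "\<And>y. y \<in> parabolic n J \<Longrightarrow> avoids132 n J y \<Longrightarrow> weak_le n u y \<Longrightarrow>
      weak_le n (u \<circ> Transposition.transpose i k) y"
  proof -
    fix y assume y: "y \<in> parabolic n J" "avoids132 n J y" "weak_le n u y"
    have yp: "y permutes {1..n}" using y by (simp add: parabolic_def)
    have "y k < y i" using B132[OF up yp _ assms(3-12) y(2)] y(3) by (simp add: weak_le_def)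
    then have "(i, k) \<in> inv_set n y" unfolding inv_set_def using assms by auto
    then show "weak_le n (u \<circ> Transposition.transpose i k) y" using y(3) inv by (simp add: weak_le_def)
  qed
  have le: "weak_le n u (u \<circ> Transposition.transpose i k)" using inv by (auto simp: weak_le_def)
  show ?thesis
  proof
    assume "isUp n J u z"
    then show "isUp n J (u \<circ> Transposition.transpose i k) z"
      unfolding isUp_def using key le by (meson dual_order.trans weak_le_def)
  next
    assume "isUp n J (u \<circ> Transposition.transpose i k) z"
    then show "isUp n J u z"
      unfolding isUp_def using key le by (meson dual_order.trans weak_le_def)
  qed
qed

lemma down_main:
  assumes J: "J \<subseteq> {1..<n}"
  shows "w \<in> parabolic n J \<Longrightarrow> \<exists>x. isDown n J w x \<and> (\<forall>z. isUp n J w z \<longleftrightarrow> isUp n J x z)"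
proof (induction "card (inv_set n w)" arbitrary: w rule: less_induct)
  case less
  have wp: "w permutes {1..n}" using less.prems by (simp add: parabolic_def)
  show ?case
  proof (cases "avoids231 n J w")
    case True
    then have "isDown n J w w" using less.prems by (simp add: isDown_def weak_le_def)
    then show ?thesis by blast
  next
    case False
    then obtain i j k where pat: "1 \<le> i" "i < j" "j < k" "k \<le> n"
      "\<not> same_region J i j" "\<not> same_region J j k" "\<not> same_region J i k"
      "w k < w i" "w i < w j" "w i = w k + 1"
      unfolding avoids231_def by blast
    have ik: "i < k" using pat by simp
    define u where "u = w \<circ> Transposition.transpose i k"
    have upar: "u \<in> parabolic n J" unfolding u_def
      using swap_par[OF J less.prems pat(1) ik pat(4) pat(7)] pat(10) by simp
    have uperm: "u permutes {1..n}" using upar by (simp add: parabolic_def)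
    have ui: "u i = w k" "u k = w i" "u j = w j" using pat unfolding u_def by auto
    have uu: "u \<circ> Transposition.transpose i k = w" unfolding u_def
      by (simp add: comp_assoc)
    have adj: "u k = u i + 1" using ui pat by simp
    have inv: "inv_set n w = insert (i, k) (inv_set n u)" "(i, k) \<notin> inv_set n u"
      using swap_inv[OF uperm pat(1) ik pat(4) adj] uu by auto
    have "card (inv_set n u) < card (inv_set n w)"
      using inv inv_set_fin[of n u] by simp
    then obtain x where x: "isDown n J u x" "\<forall>z. isUp n J u z \<longleftrightarrow> isUp n J x z"
      using less.hyps[OF _ upar] by blast
    have st: "\<And>z. isUp n J u z \<longleftrightarrow> isUp n J w z"
      using stepUp[OF J upar pat(1-7)] ui pat uu by simp
    have "isDown n J w x"
      unfolding isDown_def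
    proof (intro conjI allI impI)
      show "x \<in> parabolic n J" "avoids231 n J x" using x(1) by (auto simp: isDown_def)
      show "weak_le n x w" using x(1) inv by (auto simp: isDown_def weak_le_def)
      fix y assume y: "y \<in> parabolic n J \<and> avoids231 n J y \<and> weak_le n y w"
      have yp: "y permutes {1..n}" using y by (simp add: parabolic_def)
      have "y i < y k" using A231[OF wp yp _ pat] y by (simp add: weak_le_def)
      then have "(i, k) \<notin> inv_set n y" unfolding inv_set_def by auto
      then have "weak_le n y u" using y inv by (auto simp: weak_le_def)
      then show "weak_le n y x" using x(1) y by (simp add: isDown_def)
    qed
    then show ?thesis using x st by blast
  qed
qed

lemma isDown_unique:
  assumes "isDown n J w x" "isDown n J w x'" shows "x = x'"
proof -
  have "weak_le n x x'" "weak_le n x' x" using assms unfolding isDown_def by blast+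
  then have "inv_set n x = inv_set n x'" by (simp add: weak_le_def)
  then show ?thesis using inv_eq assms unfolding isDown_def parabolic_def by blast
qed

theorem lemma3p17:
  fixes n :: nat and J :: "nat set" and u v :: "nat \<Rightarrow> nat"
  assumes "J \<subseteq> {1..<n}"
    and "u \<in> parabolic n J" and "v \<in> parabolic n J"
    and "Pi_down n J u = Pi_down n J v"
  shows "Pi_up n J u = Pi_up n J v"
proof -
  obtain xu where xu: "isDown n J u xu" "\<forall>z. isUp n J u z \<longleftrightarrow> isUp n J xu z"
    using down_main[OF assms(1) assms(2)] by blast
  obtain xv where xv: "isDown n J v xv" "\<forall>z. isUp n J v z \<longleftrightarrow> isUp n J xv z"
    using down_main[OF assms(1) assms(3)] by blast
  have du: "Pi_down n J u = xu"
    unfolding Pi_down_def isDown_def[symmetric]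
    using xu(1) isDown_unique by (metis the_equality)
  have dv: "Pi_down n J v = xv"
    unfolding Pi_down_def isDown_def[symmetric]
    using xv(1) isDown_unique by (metis the_equality)
  have "xu = xv" using du dv assms(4) by simp
  then have "isUp n J u = isUp n J v" using xu(2) xv(2) by auto
  then show ?thesis unfolding Pi_up_def isUp_def[symmetric] by simp
qed

end
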